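(* Let $1\le d<k$ and let $\mathcal{L}\subset\mathbb{R}^k=\mathbb{R}^d\times\mathbb{R}^{k-d}$ be a lattice such that the projection $\pi\colon\mathbb{R}^k\to\mathbb{R}^d$ is injective on $\mathcal{L}$ and $\pi_{\mathrm{int}}(\mathcal{L})$ is dense in $H=\mathbb{R}^{k-d}$; let $\mathcal{L}^*$ be its dual lattice, whose elements are written $(\theta,\theta^\star)$ with $\theta\in\mathbb{R}^d$, $\theta^\star\in\mathbb{R}^{k-d}$. Let $W\subset H$ be an aligned cube (faces parallel to the coordinate hyperplanes) of side length $\eta>0$. Let $t\in\mathbb{R}^d$, $R>0$ and $0<S_R\le R$, and assume $$\{\theta\in\mathbb{R}^d:(\theta,0)\in\mathcal{L}^*,\ 0<|\theta|\le S_R^{-1}\ \text{or}\ 0<|\theta+t|\le S_R^{-1}\}=\varnothing.$$ For $s\in\mathbb{R}^d$ and $\epsilon>0$ let $\mathcal{A}_s(\epsilon)=\{(x,y)\in\mathbb{R}^d\times\mathbb{R}^{k-d}: 0<|x+s|\le S_R^{-1},\ |y|\le\epsilon^{-1}\}$, and let $\epsilon_R$ be the infimum of the set of all $\epsilon>0$ for which $\mathcal{A}_0(\epsilon)\cap\mathcal{L}^*=\mathcal{A}_t(\epsilon)\cap\mathcal{L}^*=\varnothing$. Define $$\varphi_R(x)=\frac{(\mathbf{1}_{B_R}*\mathbf{1}_{B_{S_R}})(x)}{2^dS_R^d}\ (x\in\mathbb{R}^d),\qquad \psi_R(y)=\frac{(\mathbf{1}_W*\mathbf{1}_{B_{\epsilon_R}})(y)}{2^{k-d}\epsilon_R^{k-d}}\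 (y\in\mathbb{R}^{k-d}).$$ If $\epsilon_R\le\eta$, then $$\Bigl|\sum_{\substack{(\theta,\theta^\star)\in\mathcal{L}^*\\ \theta+t\neq0}}\widehat{\varphi_R}(\theta+t)\,\widehat{\psi_R}(\theta^\star)\Bigr|\le C\bigl(R^{d-1}S_R\,\eta^{k-d}+R^d\epsilon_R\,\eta^{k-d-1}\bigr),$$ where the constant $C>0$ depends only on $k$ and $d$.
   Context: $\pi_{\mathrm{int}}$ is the projection of $\mathbb{R}^k$ onto its last $k-d$ coordinates. The dual lattice is $\mathcal{L}^*=\{y\in\mathbb{R}^k: y\cdot x\in\mathbb{Z}\ \forall x\in\mathcal{L}\}$. $|\cdot|$ denotes the sup-norm, and $B_r$ denotes the closed sup-norm cube of side length $2r$ centred at $0$ (in $\mathbb{R}^d$ or $\mathbb{R}^{k-d}$ as appropriate). $*$ is convolution, and the Fourier transform is $\widehat{\phi}(y)=\int e^{-2\pi i xy}\phi(x)\,dx$. *)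

theory Defs
  imports "HOL-Analysis.Analysis"
begin

definition is_lattice :: "'a::euclidean_space set \<Rightarrow> bool" where
  "is_lattice L \<longleftrightarrow> (\<exists>B. independent B \<and> card B = DIM('a) \<and>
      L = {(\<Sum>b\<in>B. of_int (c b) *\<^sub>R b) | c. True})"

definition dual_lattice :: "'a::euclidean_space set \<Rightarrow> 'a set" where
  "dual_lattice L = {y. \<forall>x\<in>L. y \<bullet> x \<in> \<int>}"

definition supball :: "real \<Rightarrow> 'a::euclidean_space set" where
  "supball r = {x. infnorm x \<le> r}"

definition conv :: "('a::euclidean_space \<Rightarrow> real) \<Rightarrow> ('a \<Rightarrow> real) \<Rightarrow> 'a \<Rightarrow> real" where
  "conv f g x = (LINT y|lborel. f y * g (x - y))"

definition fourier :: "('a::euclidean_space \<Rightarrow> real) \<Rightarrow> 'a \<Rightarrow> complex" where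
  "fourier \<phi> \<xi> = (LINT x|lborel. cis (- 2 * pi * (x \<bullet> \<xi>)) * complex_of_real (\<phi> x))"

definition A_set :: "real \<Rightarrow> real^'d \<Rightarrow> real \<Rightarrow> ((real^'d) \<times> (real^'h)) set" where
  "A_set S s \<epsilon> = {(x, y). 0 < infnorm (x + s) \<and> infnorm (x + s) \<le> 1 / S \<and> infnorm y \<le> 1 / \<epsilon>}"

end

theory Submission
  imports Defs
begin
lemma integral_lborel_prod:
  fixes g :: "'a::euclidean_space \<Rightarrow> real \<Rightarrow> complex"
  assumes int: "\<And>b. b \<in> Basis \<Longrightarrow> integrable lborel (g b)"
  shows "(LINT x|(lborel::'a measure). (\<Prod>b\<in>Basis. g b (x \<bullet> b))) = (\<Prod>b\<in>Basis. (LINT s|lborel. g b s))"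
proof -
  interpret P: product_sigma_finite "\<lambda>_. lborel::real measure"
    by standard
  have meas[measurable]: "g b \<in> borel_measurable borel" if "b \<in> Basis" for b
    using int[OF that] by auto
  have "(LINT x|(lborel::'a measure). (\<Prod>b\<in>Basis. g b (x \<bullet> b))) =
     (\<integral>f. (\<Prod>b\<in>Basis. g b ((\<Sum>c\<in>Basis. f c *\<^sub>R c) \<bullet> b)) \<partial>(\<Pi>\<^sub>M b\<in>Basis. lborel))"
    by (subst lborel_eq) (subst integral_distr; auto)
  also have "\<dots> = (\<integral>f. (\<Prod>b\<in>Basis. g b (f b)) \<partial>(\<Pi>\<^sub>M b\<in>Basis. lborel))"
    by (intro Bochner_Integration.integral_cong refl prod.cong) (auto simp: inner_sum_left inner_Basis if_distrib sum.delta cong: if_cong)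
  also have "\<dots> = (\<Prod>b\<in>Basis. (LINT s|lborel. g b s))"
    by (rule P.product_integral_prod) (auto intro: int)
  finally show ?thesis .
qed

lemma cis_ind_eq: "(\<lambda>s::real. cis (- 2 * pi * (s \<bullet> z)) * complex_of_real (indicator {a..c} s))
   = (\<lambda>s. indicator {a..c} s *\<^sub>R cis (- 2 * pi * (s * z)))"
  by (auto simp: fun_eq_iff indicator_def)

lemma integrable_cis_ind:
  "integrable lborel (\<lambda>s::real. cis (- 2 * pi * (s \<bullet> z)) * complex_of_real (indicator {a..c} s))"
  unfolding cis_ind_eq
  by (intro borel_integrable_compact compact_Icc continuous_intros)

lemma fourier1_norm_le:
  assumes "a \<le> c"
  shows "norm (fourier (indicator {a..c}) (z::real)) \<le> c - a"
proof -
  have "norm (fourier (indicator {a..c}) z) \<le> (LINT s|lborel. norm (cis (- 2 * pi * (s \<bullet> z)) * complex_of_real (indicator {a..c} s)))"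
    unfolding fourier_def by (rule integral_norm_bound)
  also have "\<dots> = (LINT s|lborel. indicator {a..c} s)"
    by (intro Bochner_Integration.integral_cong) (auto simp: indicator_def norm_mult)
  also have "\<dots> = c - a" using assms by simp
  finally show ?thesis .
qed

lemma fourier1_norm_le2:
  assumes "a \<le> c"
  shows "\<bar>z\<bar> * norm (fourier (indicator {a..c}) (z::real)) \<le> 1 / pi"
proof (cases "z = 0")
  case True then show ?thesis by simp
next
  case False
  define F where "F s = (1 / (- 2 * pi * z)) *\<^sub>R (- \<i> * cis (- 2 * pi * (s * z)))" for s
  have der: "(F has_vector_derivative cis (- 2 * pi * (x * z))) (at x within {a..c})" for x
  proof -
    have "((\<lambda>s. cis (- 2 * pi * (s * z))) has_derivative (\<lambda>t. (t * (- 2 * pi * z)) *\<^sub>R (\<i> * cis (- 2 * pi * (x * z))))) (at x within {a..c})"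
    proof (rule has_derivative_cis)
      have "(\<lambda>s. - 2 * pi * (s * z)) = (\<lambda>t. t * (- 2 * pi * z))" by (auto simp: fun_eq_iff)
      moreover have "((\<lambda>t. t * (- 2 * pi * z)) has_derivative (\<lambda>t. t * (- 2 * pi * z))) (at x within {a..c})"
        by (intro bounded_linear_imp_has_derivative bounded_linear_mult_left)
      ultimately show "((\<lambda>s. - 2 * pi * (s * z)) has_derivative (\<lambda>t. t * (- 2 * pi * z))) (at x within {a..c})" by simp
    qed
    then have "((\<lambda>s. - \<i> * cis (- 2 * pi * (s * z))) has_derivative (\<lambda>t. - \<i> * ((t * (- 2 * pi * z)) *\<^sub>R (\<i> * cis (- 2 * pi * (x * z)))))) (at x within {a..c})"
      by (rule has_derivative_mult_right)
    then have "(F has_derivative (\<lambda>t. (1 / (- 2 * pi * z)) *\<^sub>R (- \<i> * ((t * (- 2 * pi * z)) *\<^sub>R (\<i> * cis (- 2 * pi * (x * z))))))) (at x within {a..c})"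
      unfolding F_def by (rule has_derivative_scaleR_right)
    moreover have "(\<lambda>t. (1 / (- 2 * pi * z)) *\<^sub>R (- \<i> * ((t * (- 2 * pi * z)) *\<^sub>R (\<i> * cis (- 2 * pi * (x * z)))))) = (\<lambda>t. t *\<^sub>R cis (- 2 * pi * (x * z)))"
      using False by (auto simp: fun_eq_iff scaleR_conv_of_real field_simps)
    ultimately show ?thesis by (simp add: has_vector_derivative_def)
  qed
  have "fourier (indicator {a..c}) z = (LINT s|lborel. indicator {a..c} s *\<^sub>R cis (- 2 * pi * (s * z)))"
    unfolding fourier_def cis_ind_eq ..
  also have "\<dots> = F c - F a"
    by (rule integral_FTC_atLeastAtMost[OF assms der]) (auto intro!: continuous_intros)
  finally have eq: "fourier (indicator {a..c}) z = F c - F a" .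
  have "norm (F c - F a) \<le> norm (F c) + norm (F a)" by (rule norm_triangle_ineq4)
  also have "\<dots> = 2 / (2 * pi * \<bar>z\<bar>)" by (simp add: F_def norm_mult abs_mult)
  finally have "norm (F c - F a) \<le> 2 / (2 * pi * \<bar>z\<bar>)" .
  then have "\<bar>z\<bar> * norm (F c - F a) \<le> 1 / pi" using False by (simp add: field_simps)
  then show ?thesis unfolding eq .
qed

lemma cis_sum: "cis (\<Sum>i\<in>A. f i) = (\<Prod>i\<in>A. cis (f i))"
proof (cases "finite A")
  case True then show ?thesis by (induction A rule: finite_induct) (auto simp: cis_mult[symmetric])
qed simp

lemma indicator_cbox_prod:
  "indicator (cbox a c) (x::'a::euclidean_space) = (\<Prod>b\<in>Basis. indicator {a \<bullet> b..c \<bullet> b} (x \<bullet> b) :: real)"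
proof (cases "x \<in> cbox a c")
  case True then show ?thesis by (auto simp: indicator_def cbox_def intro!: prod.neutral[symmetric])
next
  case False
  then obtain b where "b \<in> Basis" "x \<bullet> b \<notin> {a \<bullet> b..c \<bullet> b}" by (auto simp: cbox_def)
  then show ?thesis using False by (intro trans[OF _ prod_zero[symmetric]]) (auto simp: indicator_def intro!: bexI[of _ b])
qed

lemma fourier_cbox:
  fixes a c \<xi> :: "'a::euclidean_space"
  shows "fourier (indicator (cbox a c)) \<xi> = (\<Prod>b\<in>Basis. fourier (indicator {a \<bullet> b..c \<bullet> b}) (\<xi> \<bullet> b))"
proof -
  have "fourier (indicator (cbox a c)) \<xi> = (LINT x|(lborel::'a measure). (\<Prod>b\<in>Basis.
      (\<lambda>b s. cis (- 2 * pi * (s \<bullet> (\<xi> \<bullet> b))) * complex_of_real (indicator {a \<bullet> b..c \<bullet> b} s)) b (x \<bullet> b)))"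
    unfolding fourier_def
  proof (intro Bochner_Integration.integral_cong refl)
    fix x :: 'a
    have "cis (- 2 * pi * (x \<bullet> \<xi>)) = cis (\<Sum>b\<in>Basis. - 2 * pi * ((x \<bullet> b) * (\<xi> \<bullet> b)))"
      by (subst euclidean_inner) (simp add: sum_distrib_left)
    also have "\<dots> = (\<Prod>b\<in>Basis. cis (- 2 * pi * ((x \<bullet> b) * (\<xi> \<bullet> b))))" by (rule cis_sum)
    finally show "cis (- 2 * pi * (x \<bullet> \<xi>)) * complex_of_real (indicator (cbox a c) x) =
         (\<Prod>b\<in>Basis. (\<lambda>b s. cis (- 2 * pi * (s \<bullet> (\<xi> \<bullet> b))) * complex_of_real (indicator {a \<bullet> b..c \<bullet> b} s)) b (x \<bullet> b))"
      by (simp add: indicator_cbox_prod prod.distrib)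
  qed
  also have "\<dots> = (\<Prod>b\<in>Basis. (LINT s|lborel. cis (- 2 * pi * (s \<bullet> (\<xi> \<bullet> b))) * complex_of_real (indicator {a \<bullet> b..c \<bullet> b} s)))"
    by (rule integral_lborel_prod) (rule integrable_cis_ind)
  finally show ?thesis unfolding fourier_def .
qed

lemma fourier_conv_cbox:
  fixes a1 c1 a2 c2 \<xi> :: "'a::euclidean_space"
  shows "fourier (\<lambda>x. conv (indicator (cbox a1 c1)) (indicator (cbox a2 c2)) x / K) \<xi>
       = fourier (indicator (cbox a1 c1)) \<xi> * fourier (indicator (cbox a2 c2)) \<xi> / complex_of_real K"
proof -
  let ?A = "cbox a1 c1" and ?B = "cbox a2 c2"
  define e where "e x = cis (- 2 * pi * (x \<bullet> \<xi>))" for x :: 'a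
  define G where "G x y = e x * complex_of_real (indicator ?A y * indicator ?B (x - y))" for x y :: 'a
  have e_meas[measurable]: "e \<in> borel_measurable borel"
    unfolding e_def by (intro borel_measurable_continuous_onI continuous_intros)
  have G_meas[measurable]: "(\<lambda>(x,y). G x y) \<in> borel_measurable (lborel \<Otimes>\<^sub>M lborel)"
    unfolding G_def by measurable
  have intG: "integrable (lborel \<Otimes>\<^sub>M lborel) (\<lambda>(x,y). G x y)"
  proof (rule Bochner_Integration.integrable_bound)
    let ?C = "cbox (a1 + a2, a1) (c1 + c2, c1)"
    show "integrable (lborel \<Otimes>\<^sub>M lborel) (\<lambda>p. indicator ?C p *\<^sub>R (1::real))"
      unfolding lborel_prod by (intro borel_integrable_compact compact_cbox continuous_intros)
    show "(\<lambda>(x,y). G x y) \<in> borel_measurable (lborel \<Otimes>\<^sub>M lborel)" by (rule G_meas)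
    show "AE p in lborel \<Otimes>\<^sub>M lborel. norm ((\<lambda>(x,y). G x y) p) \<le> norm (indicator ?C p *\<^sub>R (1::real))"
    proof (intro AE_I2)
      fix p :: "'a \<times> 'a"
      obtain x y where p: "p = (x, y)" by (cases p)
      show "norm ((\<lambda>(x,y). G x y) p) \<le> norm (indicator ?C p *\<^sub>R (1::real))"
      proof (cases "y \<in> ?A \<and> x - y \<in> ?B")
        case True
        then have "p \<in> ?C" unfolding p
          by (auto simp: mem_box inner_add_left Basis_prod_def inner_diff_left; smt (verit))
        then show ?thesis using True by (simp add: p G_def e_def norm_mult)
      next
        case False
        then show ?thesis by (auto simp: p G_def e_def norm_mult indicator_def)
      qed
    qed
  qed
  have "fourier (\<lambda>x. conv (indicator ?A) (indicator ?B) x / K) \<xi>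
      = (LINT x|lborel. e x * complex_of_real (conv (indicator ?A) (indicator ?B) x)) / complex_of_real K"
    unfolding fourier_def e_def by (simp add: of_real_divide)
  also have "(LINT x|lborel. e x * complex_of_real (conv (indicator ?A) (indicator ?B) x))
      = (LINT x|lborel. (LINT y|lborel. G x y))"
    unfolding conv_def G_def by (simp only: integral_mult_right_zero integral_complex_of_real)
  also have "\<dots> = (LINT y|lborel. (LINT x|lborel. G x y))"
    by (rule lborel_pair.Fubini_integral[symmetric]) (rule intG)
  also have "\<dots> = (LINT y|lborel. (e y * complex_of_real (indicator ?A y)) * fourier (indicator ?B) \<xi>)"
  proof (intro Bochner_Integration.integral_cong refl)
    fix y :: 'a
    have "(LINT x|lborel. G x y) = (LINT x|distr lborel borel ((+) y). G x y)"
      by (simp add: lborel_distr_plus)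
    also have "\<dots> = (LINT w|lborel. G (y + w) y)"
      by (subst integral_distr) auto
    also have "\<dots> = (LINT w|lborel. (e y * complex_of_real (indicator ?A y)) * (e w * complex_of_real (indicator ?B w)))"
    proof (intro Bochner_Integration.integral_cong refl)
      fix w :: 'a
      have "e (y + w) = e y * e w" unfolding e_def cis_mult by (simp add: inner_add_left algebra_simps)
      then show "G (y + w) y = (e y * complex_of_real (indicator ?A y)) * (e w * complex_of_real (indicator ?B w))"
        by (simp add: G_def)
    qed
    also have "\<dots> = (e y * complex_of_real (indicator ?A y)) * fourier (indicator ?B) \<xi>"
      unfolding fourier_def e_def by simp
    finally show "(LINT x|lborel. G x y) = (e y * complex_of_real (indicator ?A y)) * fourier (indicator ?B) \<xi>" .
  qed
  also have "\<dots> = fourier (indicator ?A) \<xi> * fourier (indicator ?B) \<xi>"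
    unfolding fourier_def e_def by simp
  finally show ?thesis .
qed

definition rr :: "int \<Rightarrow> real" where "rr n = 1 / (real_of_int \<bar>n\<bar> + 1)^2"

lemma rr_nonneg: "rr n \<ge> 0" by (simp add: rr_def)

lemma summable_rr: "rr summable_on UNIV"
proof -
  have s0: "summable (\<lambda>n::nat. inverse (real n ^ 2))" by (rule inverse_power_summable) simp
  have s1: "summable (\<lambda>n::nat. 1 / (real n + 1)^2)"
    using s0 unfolding summable_Suc_iff[symmetric, of "\<lambda>n::nat. inverse (real n ^ 2)"]
    by (simp add: field_simps add.commute)
  have s2: "summable (\<lambda>n::nat. 1 / (real n + 2)^2)"
  proof (rule summable_comparison_test[OF _ s1])
    show "\<exists>N. \<forall>n\<ge>N. norm (1 / (real n + 2)^2) \<le> 1 / (real n + 1)^2"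
      by (intro exI[of _ 0] allI impI) (auto simp: divide_simps power_mono)
  qed
  have "(rr \<circ> int) summable_on UNIV"
    using s1 by (subst summable_on_UNIV_nonneg_real_iff) (auto simp: rr_def o_def)
  then have a: "rr summable_on range int"
    by (subst summable_on_reindex) (auto simp: inj_on_def)
  have "(rr \<circ> (\<lambda>n. - int (Suc n))) summable_on UNIV"
  proof (subst summable_on_UNIV_nonneg_real_iff)
    show "summable (rr \<circ> (\<lambda>n. - int (Suc n)))"
      using s2 by (simp add: rr_def o_def add.commute add.left_commute)
  qed (auto simp: rr_def)
  then have b: "rr summable_on range (\<lambda>n. - int (Suc n))"
    by (subst summable_on_reindex) (auto simp: inj_on_def)
  have "rr summable_on (range int \<union> range (\<lambda>n. - int (Suc n)))"
    by (rule summable_on_Un_disjoint[OF a b]) auto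
  moreover have "range int \<union> range (\<lambda>n. - int (Suc n)) = UNIV"
  proof -
    have "x \<in> range int \<union> range (\<lambda>n. - int (Suc n))" for x :: int
    proof (cases "x \<ge> 0")
      case True then show ?thesis by (auto intro: image_eqI[of _ _ "nat x"])
    next
      case False then show ?thesis by (auto intro!: image_eqI[of _ _ "nat (- x - 1)"])
    qed
    then show ?thesis by auto
  qed
  ultimately show ?thesis by simp
qed

definition Q :: "real \<Rightarrow> int \<Rightarrow> real" where "Q c n = (if n = 0 then 0 else 9 * c * rr n)"
definition Tf :: "real \<Rightarrow> real \<Rightarrow> int \<Rightarrow> real" where
  "Tf T c n = (if n = 0 \<or> n = -1 then T else 0) + Q c n"
definition Bf :: "real \<Rightarrow> int \<Rightarrow> real" where "Bf T n = (if -1 \<le> n \<and> n \<le> 1 then T else 0)"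

definition K0 :: real where "K0 = infsum (\<lambda>n. if n = 0 then 0 else rr n) UNIV"

lemma summable_rr0: "(\<lambda>n. if n = 0 then 0 else rr n) summable_on UNIV"
  by (rule summable_on_comparison_test[OF summable_rr]) (auto simp: rr_nonneg)

lemma K0_nonneg: "K0 \<ge> 0"
  unfolding K0_def by (rule infsum_nonneg) (auto simp: rr_nonneg)

lemma Q_eq: "Q c = (\<lambda>n. 9 * c * (if n = 0 then 0 else rr n))"
  by (auto simp: Q_def fun_eq_iff)

lemma Q_summable: "Q c summable_on UNIV"
  unfolding Q_eq by (intro summable_on_cmult_right summable_rr0)

lemma Q_infsum: "infsum (Q c) UNIV = 9 * c * K0"
  unfolding Q_eq K0_def by (rule infsum_cmult_right') 

lemma Q_nonneg: "c \<ge> 0 \<Longrightarrow> Q c n \<ge> 0" by (simp add: Q_def rr_nonneg)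

lemma fin_summable: "(\<lambda>n::int. if n \<in> F then T else 0) summable_on UNIV \<and> infsum (\<lambda>n::int. if n \<in> F then T else 0) UNIV = T * real (card F)" if "finite F" for T :: real
proof -
  have "((\<lambda>n::int. if n \<in> F then T else 0) has_sum (\<Sum>n\<in>F. T)) UNIV"
    by (rule has_sum_finite_neutralI) (use that in auto)
  then show ?thesis by (simp add: has_sum_iff)
qed

lemma Tf_summable: "Tf T c summable_on UNIV" and Tf_infsum: "infsum (Tf T c) UNIV = 2 * T + 9 * c * K0"
proof -
  have e: "Tf T c = (\<lambda>n. (\<lambda>n::int. if n \<in> {0, -1} then T else 0) n + Q c n)"
    by (auto simp: Tf_def fun_eq_iff)
  have f: "finite {0::int, -1}" by simp
  show "Tf T c summable_on UNIV" unfolding e by (intro summable_on_add Q_summable fin_summable[OF f, THEN conjunct1])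
  show "infsum (Tf T c) UNIV = 2 * T + 9 * c * K0" unfolding e
    by (subst infsum_add) (use fin_summable[OF f] Q_summable Q_infsum in auto)
qed

lemma Bf_summable: "Bf T summable_on UNIV" and Bf_infsum: "infsum (Bf T) UNIV = 3 * T"
proof -
  have e: "Bf T = (\<lambda>n::int. if n \<in> {-1, 0, 1} then T else 0)"
    by (auto simp: Bf_def fun_eq_iff)
  have f: "finite {-1::int, 0, 1}" by simp
  show "Bf T summable_on UNIV" unfolding e by (rule fin_summable[OF f, THEN conjunct1])
  show "infsum (Bf T) UNIV = 3 * T" unfolding e using fin_summable[OF f] by simp
qed

lemma Tf_nonneg: "T \<ge> 0 \<Longrightarrow> c \<ge> 0 \<Longrightarrow> Tf T c n \<ge> 0" by (simp add: Tf_def Q_nonneg)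
lemma Bf_nonneg: "T \<ge> 0 \<Longrightarrow> Bf T n \<ge> 0" by (simp add: Bf_def)

lemma cell_big:
  assumes c: "c > 0" and w: "0 \<le> w" "c * x^2 * w \<le> 1" and x: "\<bar>x\<bar> \<ge> 1 / c"
  shows "w \<le> Q c \<lfloor>c * x\<rfloor>"
proof -
  define z where "z = c * x"
  define n where "n = \<lfloor>z\<rfloor>"
  have z1: "\<bar>z\<bar> \<ge> 1" using x c by (simp add: z_def abs_mult field_simps)
  have fl: "of_int n \<le> z" "z < of_int n + 1" unfolding n_def by linarith+
  have n0: "n \<noteq> 0" using z1 fl by auto
  have h1: "real_of_int \<bar>n\<bar> + 1 \<le> 3 * \<bar>z\<bar>"
  proof (cases "z \<ge> 1")
    case True then have "n \<ge> 0" using fl by linarith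
    then show ?thesis using fl True by linarith
  next
    case False then have "z \<le> -1" using z1 by linarith
    then have "n < 0" using fl by linarith
    then show ?thesis using fl \<open>z \<le> -1\<close> by linarith
  qed
  have "c * (c * x^2 * w) \<le> c * 1" using mult_left_mono[OF w(2)] c by simp
  moreover have "w * z^2 = c * (c * x^2 * w)" by (simp add: z_def power2_eq_square)
  ultimately have wz: "w * z^2 \<le> c" by linarith
  have "(real_of_int \<bar>n\<bar> + 1)^2 \<le> (3 * \<bar>z\<bar>)^2"
    by (rule power_mono[OF h1]) simp
  then have "w * (real_of_int \<bar>n\<bar> + 1)^2 \<le> w * (9 * z^2)"
    using w(1) by (intro mult_left_mono) (auto simp: power_mult_distrib)
  also have "\<dots> \<le> 9 * c" using wz by simp
  finally have "w \<le> 9 * c / (real_of_int \<bar>n\<bar> + 1)^2"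
    by (simp add: field_simps add_pos_nonneg)
  then show ?thesis using n0 by (simp add: Q_def rr_def n_def z_def)
qed

lemma cell_all:
  assumes c: "c > 0" and w: "0 \<le> w" "w \<le> T" "c * x^2 * w \<le> 1"
  shows "w \<le> Tf T c \<lfloor>c * x\<rfloor>"
proof (cases "\<bar>x\<bar> \<ge> 1 / c")
  case True
  then show ?thesis using cell_big[OF c w(1) w(3) True] w by (simp add: Tf_def)
next
  case False
  then have "\<bar>c * x\<bar> < 1" using c by (simp add: abs_mult field_simps)
  then have "-1 < c * x" "c * x < 1" by auto
  then have "-1 \<le> \<lfloor>c * x\<rfloor> \<and> \<lfloor>c * x\<rfloor> \<le> 0" by (simp add: le_floor_iff floor_le_iff)
  then have "\<lfloor>c * x\<rfloor> = 0 \<or> \<lfloor>c * x\<rfloor> = -1" by linarith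
  then show ?thesis using w Q_nonneg[of c 0] Q_nonneg[of c "-1"] c by (auto simp: Tf_def)
qed

lemma cell_small:
  assumes c: "c > 0" and w: "w \<le> T" and x: "\<bar>x\<bar> \<le> 1 / c"
  shows "w \<le> Bf T \<lfloor>c * x\<rfloor>"
proof -
  have "\<bar>c * x\<bar> \<le> 1" using c x by (simp add: abs_mult field_simps)
  then have "-1 \<le> c * x" "c * x \<le> 1" by auto
  then have "-1 \<le> \<lfloor>c * x\<rfloor> \<and> \<lfloor>c * x\<rfloor> \<le> 1" by (simp add: le_floor_iff floor_le_iff)
  then show ?thesis using w by (simp add: Bf_def)
qed

lemma prod_PiE_summable:
  fixes F :: "'x \<Rightarrow> int \<Rightarrow> real"
  assumes X: "finite X" and s: "\<And>a. a \<in> X \<Longrightarrow> F a summable_on UNIV"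
    and nn: "\<And>a n. a \<in> X \<Longrightarrow> F a n \<ge> 0"
  shows "(\<lambda>n. \<Prod>a\<in>X. F a (n a)) summable_on PiE X (\<lambda>_. UNIV)"
    and "infsum (\<lambda>n. \<Prod>a\<in>X. F a (n a)) (PiE X (\<lambda>_. UNIV)) = (\<Prod>a\<in>X. infsum (F a) UNIV)"
proof -
  have abs: "(\<lambda>n. norm (F a n)) summable_on UNIV" if "a \<in> X" for a
    using s[OF that] nn[OF that] by (simp)
  then have "Infinite_Set_Sum.abs_summable_on (F a) UNIV" if "a \<in> X" for a
    using abs_summable_equivalent that by blast
  then have "Infinite_Set_Sum.abs_summable_on (\<lambda>n. \<Prod>a\<in>X. F a (n a)) (PiE X (\<lambda>_. UNIV))"
    by (intro abs_summable_on_prod_PiE X) auto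
  then have "(\<lambda>n. norm (\<Prod>a\<in>X. F a (n a))) summable_on (PiE X (\<lambda>_. UNIV))"
    by (rule abs_summable_equivalent[THEN iffD2])
  then show "(\<lambda>n. \<Prod>a\<in>X. F a (n a)) summable_on PiE X (\<lambda>_. UNIV)"
    by (rule abs_summable_summable)
  show "infsum (\<lambda>n. \<Prod>a\<in>X. F a (n a)) (PiE X (\<lambda>_. UNIV)) = (\<Prod>a\<in>X. infsum (F a) UNIV)"
    by (rule infsum_prod_PiE_abs[OF X]) (use abs in auto)
qed

lemma infsum_finsum:
  fixes f :: "'i \<Rightarrow> 'a \<Rightarrow> real"
  assumes "finite Y" "\<And>i. i \<in> Y \<Longrightarrow> f i summable_on A"
  shows "(\<lambda>x. \<Sum>i\<in>Y. f i x) summable_on A \<and> infsum (\<lambda>x. \<Sum>i\<in>Y. f i x) A = (\<Sum>i\<in>Y. infsum (f i) A)"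
  using assms
proof (induction Y rule: finite_induct)
  case empty then show ?case by simp
next
  case (insert i Y)
  then have s: "(\<lambda>x. \<Sum>i\<in>Y. f i x) summable_on A" "infsum (\<lambda>x. \<Sum>i\<in>Y. f i x) A = (\<Sum>i\<in>Y. infsum (f i) A)"
    and fi: "f i summable_on A" by auto
  have "(\<lambda>x. \<Sum>i\<in>insert i Y. f i x) = (\<lambda>x. f i x + (\<Sum>i\<in>Y. f i x))"
    using insert.hyps by auto
  then show ?case using s fi insert.hyps by (simp add: summable_on_add infsum_add)
qed

lemma lattice_cell_bound:
  fixes V :: "'v set" and X1 X2 :: "'x set" and z :: "'v \<Rightarrow> 'x \<Rightarrow> real"
    and c T :: "'x \<Rightarrow> real" and m :: "'x \<Rightarrow> 'v \<Rightarrow> real"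
  assumes fin: "finite X1" "finite X2" "X1 \<inter> X2 = {}"
    and c: "\<And>a. a \<in> X1 \<union> X2 \<Longrightarrow> c a > 0" and T: "\<And>a. a \<in> X1 \<union> X2 \<Longrightarrow> T a \<ge> 0"
    and m: "\<And>a v. a \<in> X1 \<union> X2 \<Longrightarrow> v \<in> V \<Longrightarrow> 0 \<le> m a v \<and> m a v \<le> T a \<and> c a * (z v a)^2 * m a v \<le> 1"
    and inj: "inj_on (\<lambda>v. restrict (\<lambda>a. \<lfloor>c a * z v a\<rfloor>) (X1 \<union> X2)) V"
    and cases: "\<And>v. v \<in> V \<Longrightarrow> (\<exists>a\<in>X1. \<bar>z v a\<bar> \<ge> 1 / c a) \<or>
                   ((\<forall>a\<in>X1. \<bar>z v a\<bar> \<le> 1 / c a) \<and> (\<exists>a\<in>X2. \<bar>z v a\<bar> \<ge> 1 / c a))"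
  shows "(\<lambda>v. \<Prod>a\<in>X1 \<union> X2. m a v) summable_on V \<and>
         infsum (\<lambda>v. \<Prod>a\<in>X1 \<union> X2. m a v) V \<le>
           (\<Sum>a0\<in>X1. \<Prod>a\<in>X1 \<union> X2. (if a = a0 then 9 * c a * K0 else 2 * T a + 9 * c a * K0))
         + (\<Sum>a0\<in>X2. \<Prod>a\<in>X1 \<union> X2. (if a = a0 then 9 * c a * K0 else if a \<in> X1 then 3 * T a else 2 * T a + 9 * c a * K0))"
proof -
  define X where "X = X1 \<union> X2"
  have finX: "finite X" using fin by (simp add: X_def)
  define P where "P = PiE X (\<lambda>_. UNIV :: int set)"
  define \<kappa> where "\<kappa> v = restrict (\<lambda>a. \<lfloor>c a * z v a\<rfloor>) X" for v
  define FI where "FI a0 a = (if a = a0 then Q (c a) else Tf (T a) (c a))" for a0 a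
  define FII where "FII a0 a = (if a = a0 then Q (c a) else if a \<in> X1 then Bf (T a) else Tf (T a) (c a))" for a0 a
  define H where "H n = (\<Sum>a0\<in>X1. \<Prod>a\<in>X. FI a0 a (n a)) + (\<Sum>a0\<in>X2. \<Prod>a\<in>X. FII a0 a (n a))" for n
  have FI_s: "FI a0 a summable_on UNIV" for a0 a
    by (simp add: FI_def Q_summable Tf_summable)
  have FII_s: "FII a0 a summable_on UNIV" for a0 a
    by (simp add: FII_def Q_summable Tf_summable Bf_summable)
  have FI_nn: "FI a0 a n \<ge> 0" if "a \<in> X" for a0 a n
    using c[of a] T[of a] that by (auto simp: FI_def X_def intro!: Q_nonneg Tf_nonneg)
  have FII_nn: "FII a0 a n \<ge> 0" if "a \<in> X" for a0 a n
    using c[of a] T[of a] that by (auto simp: FII_def X_def intro!: Q_nonneg Tf_nonneg Bf_nonneg)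
  have FI_i: "infsum (FI a0 a) UNIV = (if a = a0 then 9 * c a * K0 else 2 * T a + 9 * c a * K0)" for a0 a
    by (simp add: FI_def Q_infsum Tf_infsum)
  have FII_i: "infsum (FII a0 a) UNIV = (if a = a0 then 9 * c a * K0 else if a \<in> X1 then 3 * T a else 2 * T a + 9 * c a * K0)" for a0 a
    by (simp add: FII_def Q_infsum Tf_infsum Bf_infsum)
  have pI: "(\<lambda>n. \<Prod>a\<in>X. FI a0 a (n a)) summable_on P \<and> infsum (\<lambda>n. \<Prod>a\<in>X. FI a0 a (n a)) P = (\<Prod>a\<in>X. (if a = a0 then 9 * c a * K0 else 2 * T a + 9 * c a * K0))" for a0
    using prod_PiE_summable[OF finX, of "FI a0"] FI_s FI_nn FI_i unfolding P_def by auto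
  have pII: "(\<lambda>n. \<Prod>a\<in>X. FII a0 a (n a)) summable_on P \<and> infsum (\<lambda>n. \<Prod>a\<in>X. FII a0 a (n a)) P = (\<Prod>a\<in>X. (if a = a0 then 9 * c a * K0 else if a \<in> X1 then 3 * T a else 2 * T a + 9 * c a * K0))" for a0
    using prod_PiE_summable[OF finX, of "FII a0"] FII_s FII_nn FII_i unfolding P_def by auto
  have sI: "(\<lambda>n. \<Sum>a0\<in>X1. \<Prod>a\<in>X. FI a0 a (n a)) summable_on P \<and> infsum (\<lambda>n. \<Sum>a0\<in>X1. \<Prod>a\<in>X. FI a0 a (n a)) P = (\<Sum>a0\<in>X1. \<Prod>a\<in>X. (if a = a0 then 9 * c a * K0 else 2 * T a + 9 * c a * K0))"
    using infsum_finsum[OF fin(1), of "\<lambda>a0 n. \<Prod>a\<in>X. FI a0 a (n a)" P] pI by auto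
  have sII: "(\<lambda>n. \<Sum>a0\<in>X2. \<Prod>a\<in>X. FII a0 a (n a)) summable_on P \<and> infsum (\<lambda>n. \<Sum>a0\<in>X2. \<Prod>a\<in>X. FII a0 a (n a)) P = (\<Sum>a0\<in>X2. \<Prod>a\<in>X. (if a = a0 then 9 * c a * K0 else if a \<in> X1 then 3 * T a else 2 * T a + 9 * c a * K0))"
    using infsum_finsum[OF fin(2), of "\<lambda>a0 n. \<Prod>a\<in>X. FII a0 a (n a)" P] pII by auto
  have Hs: "H summable_on P" unfolding H_def using sI sII by (intro summable_on_add) auto
  have Hi: "infsum H P = (\<Sum>a0\<in>X1. \<Prod>a\<in>X. (if a = a0 then 9 * c a * K0 else 2 * T a + 9 * c a * K0))
         + (\<Sum>a0\<in>X2. \<Prod>a\<in>X. (if a = a0 then 9 * c a * K0 else if a \<in> X1 then 3 * T a else 2 * T a + 9 * c a * K0))"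
    unfolding H_def using sI sII by (subst infsum_add) auto
  have tI_nn: "(\<Prod>a\<in>X. FI a0 a (n a)) \<ge> 0" for a0 n by (intro prod_nonneg) (auto intro: FI_nn)
  have tII_nn: "(\<Prod>a\<in>X. FII a0 a (n a)) \<ge> 0" for a0 n by (intro prod_nonneg) (auto intro: FII_nn)
  have H_nn: "H n \<ge> 0" for n unfolding H_def
    by (intro add_nonneg_nonneg sum_nonneg) (auto intro: tI_nn tII_nn)
  have kP: "\<kappa> ` V \<subseteq> P" by (auto simp: \<kappa>_def P_def)
  have kv: "\<kappa> v a = \<lfloor>c a * z v a\<rfloor>" if "a \<in> X" for v a using that by (simp add: \<kappa>_def)
  have bound: "(\<Prod>a\<in>X. m a v) \<le> H (\<kappa> v)" if v: "v \<in> V" for v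
  proof -
    have mX: "0 \<le> m a v" "m a v \<le> T a" "c a * (z v a)^2 * m a v \<le> 1" "c a > 0" if "a \<in> X" for a
      using m[of a v] c[of a] that v by (auto simp: X_def)
    from cases[OF v] show ?thesis
    proof
      assume "\<exists>a\<in>X1. \<bar>z v a\<bar> \<ge> 1 / c a"
      then obtain a0 where a0: "a0 \<in> X1" "\<bar>z v a0\<bar> \<ge> 1 / c a0" by auto
      have "(\<Prod>a\<in>X. m a v) \<le> (\<Prod>a\<in>X. FI a0 a (\<kappa> v a))"
      proof (intro prod_mono conjI)
        fix a assume a: "a \<in> X"
        show "0 \<le> m a v" using mX[OF a] by simp
        show "m a v \<le> FI a0 a (\<kappa> v a)"
        proof (cases "a = a0")
          case True then show ?thesis using cell_big[OF mX(4)[OF a] mX(1)[OF a] mX(3)[OF a]] a0 a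
            by (simp add: FI_def kv)
        next
          case False then show ?thesis using cell_all[OF mX(4)[OF a] mX(1)[OF a] mX(2)[OF a] mX(3)[OF a]] a
            by (simp add: FI_def kv)
        qed
      qed
      also have "\<dots> \<le> (\<Sum>a0\<in>X1. \<Prod>a\<in>X. FI a0 a (\<kappa> v a))"
        by (rule member_le_sum[OF a0(1)]) (auto intro: tI_nn fin)
      also have "\<dots> \<le> H (\<kappa> v)" unfolding H_def
        by (intro add_increasing2 sum_nonneg) (auto intro: tII_nn)
      finally show ?thesis .
    next
      assume as: "(\<forall>a\<in>X1. \<bar>z v a\<bar> \<le> 1 / c a) \<and> (\<exists>a\<in>X2. \<bar>z v a\<bar> \<ge> 1 / c a)"
      then obtain a0 where a0: "a0 \<in> X2" "\<bar>z v a0\<bar> \<ge> 1 / c a0" by auto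
      have "(\<Prod>a\<in>X. m a v) \<le> (\<Prod>a\<in>X. FII a0 a (\<kappa> v a))"
      proof (intro prod_mono conjI)
        fix a assume a: "a \<in> X"
        show "0 \<le> m a v" using mX[OF a] by simp
        show "m a v \<le> FII a0 a (\<kappa> v a)"
        proof (cases "a = a0")
          case True then show ?thesis using cell_big[OF mX(4)[OF a] mX(1)[OF a] mX(3)[OF a]] a0 a
            by (simp add: FII_def kv)
        next
          case False
          show ?thesis
          proof (cases "a \<in> X1")
            case True
            then show ?thesis using cell_small[OF mX(4)[OF a] mX(2)[OF a]] as a False
              by (simp add: FII_def kv)
          next
            case False2: False
            then show ?thesis using cell_all[OF mX(4)[OF a] mX(1)[OF a] mX(2)[OF a] mX(3)[OF a]] a False
              by (simp add: FII_def kv)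
          qed
        qed
      qed
      also have "\<dots> \<le> (\<Sum>a0\<in>X2. \<Prod>a\<in>X. FII a0 a (\<kappa> v a))"
        by (rule member_le_sum[OF a0(1)]) (auto intro: tII_nn fin)
      also have "\<dots> \<le> H (\<kappa> v)" unfolding H_def
        by (intro add_increasing sum_nonneg) (auto intro: tI_nn)
      finally show ?thesis .
    qed
  qed
  have injk: "inj_on \<kappa> V" using inj unfolding \<kappa>_def X_def .
  have Hs2: "H summable_on \<kappa> ` V" by (rule summable_on_subset_banach[OF Hs kP])
  then have Hk: "(H \<circ> \<kappa>) summable_on V" by (subst summable_on_reindex[symmetric, OF injk])
  have gnn: "(\<Prod>a\<in>X. m a v) \<ge> 0" if "v \<in> V" for v
    using m that by (intro prod_nonneg) (auto simp: X_def)
  have gs: "(\<lambda>v. \<Prod>a\<in>X. m a v) summable_on V"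
    by (rule summable_on_comparison_test[OF Hk]) (auto intro: bound gnn)
  have "infsum (\<lambda>v. \<Prod>a\<in>X. m a v) V \<le> infsum (H \<circ> \<kappa>) V"
    by (rule infsum_mono[OF gs Hk]) (auto intro: bound)
  also have "\<dots> = infsum H (\<kappa> ` V)" by (rule infsum_reindex[symmetric, OF injk])
  also have "\<dots> \<le> infsum H P"
    by (rule infsum_mono_neutral[OF Hs2 Hs]) (use kP H_nn in auto)
  finally show ?thesis using gs Hi unfolding X_def by simp
qed

lemma dual_diff: "v \<in> dual_lattice L \<Longrightarrow> w \<in> dual_lattice L \<Longrightarrow> v - w \<in> dual_lattice L"
  by (auto simp: dual_lattice_def inner_diff_left intro: Ints_diff)

lemma dual_inj:
  fixes L :: "('a::euclidean_space \<times> 'b::euclidean_space) set"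
  assumes cl: "closure (snd ` L) = UNIV" and y: "(0, y) \<in> dual_lattice L"
  shows "y = 0"
proof (rule ccontr)
  assume y0: "y \<noteq> 0"
  have "snd ` L \<subseteq> {z. y \<bullet> z \<in> \<int>}"
    using y by (auto simp: dual_lattice_def)
  moreover have "closed {z. y \<bullet> z \<in> \<int>}"
    by (intro closed_vimage[of "\<int>" "\<lambda>z. y \<bullet> z", unfolded vimage_def]) (auto intro: continuous_intros)
  ultimately have "closure (snd ` L) \<subseteq> {z. y \<bullet> z \<in> \<int>}" by (rule closure_minimal)
  then have "\<forall>z. y \<bullet> z \<in> \<int>" using cl by blast
  then have h1: "y \<bullet> ((1 / (2 * (y \<bullet> y))) *\<^sub>R y) \<in> \<int>" by blast
  have h2: "y \<bullet> ((1 / (2 * (y \<bullet> y))) *\<^sub>R y) = 1/2" using y0 by simp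
  from h1 have "(1/2::real) \<in> \<int>" unfolding h2 .
  then obtain k :: int where k: "1/2 = real_of_int k" by (auto elim: Ints_cases)
  have "k \<ge> 1 \<or> k \<le> 0" by linarith
  then show False
  proof
    assume "k \<ge> 1" then have "real_of_int k \<ge> 1" by simp
    then show False using k by linarith
  next
    assume "k \<le> 0" then have "real_of_int k \<le> 0" by simp
    then show False using k by linarith
  qed
qed

lemma dual_finite:
  fixes L :: "'a::euclidean_space set"
  assumes "is_lattice L"
  shows "finite {v \<in> dual_lattice L. norm v \<le> M}"
proof -
  obtain B where B: "independent B" "card B = DIM('a)" "L = {(\<Sum>b\<in>B. of_int (c b) *\<^sub>R b) | c. True}"
    using assms unfolding is_lattice_def by blast
  have finB: "finite B" using B(1) by (simp add: finiteI_independent)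
  have BL: "b \<in> L" if "b \<in> B" for b
  proof -
    have "(\<Sum>b'\<in>B. of_int (if b' = b then 1 else 0) *\<^sub>R b') = b"
    proof -
      have "(\<Sum>b'\<in>B. of_int (if b' = b then 1 else 0) *\<^sub>R b') = (\<Sum>b'\<in>B. if b' = b then b' else 0)"
        by (intro sum.cong) auto
      then show ?thesis using that finB by simp
    qed
    then show ?thesis unfolding B(3) by (auto intro!: exI[of _ "\<lambda>b'. if b' = b then 1 else 0"])
  qed
  have span: "span B = UNIV"
    using card_ge_dim_independent[of B UNIV] B by auto
  define T where "T v = restrict (\<lambda>b. v \<bullet> b) B" for v :: 'a
  have inj: "inj T"
  proof (rule injI)
    fix v w assume "T v = T w"
    then have vwb: "(v - w) \<bullet> b = 0" if "b \<in> B" for b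
      using that by (auto simp: T_def fun_eq_iff restrict_def inner_diff_left split: if_splits)
    have vw: "v - w \<in> span B" using span by simp
    have "orthogonal (v - w) (v - w)"
    proof (rule orthogonal_to_span[OF vw])
      fix y assume "y \<in> B"
      then show "orthogonal (v - w) y" using vwb by (simp add: orthogonal_def)
    qed
    then show "v = w" by (simp add: orthogonal_def)
  qed
  have sub: "T ` {v \<in> dual_lattice L. norm v \<le> M} \<subseteq> PiE B (\<lambda>b. {k::real. k \<in> \<int> \<and> \<bar>k\<bar> \<le> M * norm b})"
  proof clarify
    fix v assume v: "v \<in> dual_lattice L" "norm v \<le> M"
    show "T v \<in> PiE B (\<lambda>b. {k::real. k \<in> \<int> \<and> \<bar>k\<bar> \<le> M * norm b})"
    unfolding T_def restrict_PiE_iff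
    proof (intro ballI CollectI conjI)
      fix b assume b: "b \<in> B"
      show "v \<bullet> b \<in> \<int>" using v(1) BL[OF b] by (auto simp: dual_lattice_def)
      have "\<bar>v \<bullet> b\<bar> \<le> norm v * norm b" by (rule Cauchy_Schwarz_ineq2)
      also have "\<dots> \<le> M * norm b" using v(2) by (intro mult_right_mono) auto
      finally show "\<bar>v \<bullet> b\<bar> \<le> M * norm b" .
    qed
  qed
  have "finite (PiE B (\<lambda>b. {k::real. k \<in> \<int> \<and> \<bar>k\<bar> \<le> M * norm b}))"
    by (intro finite_PiE finB finite_abs_int_segment)
  then have "finite (T ` {v \<in> dual_lattice L. norm v \<le> M})" using sub finite_subset by blast
  then show ?thesis using inj by (rule finite_imageD[OF _ inj_on_subset]) auto
qed

lemma A_set_mem: "(x, y) \<in> A_set S s \<epsilon> \<longleftrightarrow> 0 < infnorm (x + s) \<and> infnorm (x + s) \<le> 1 / S \<and> infnorm y \<le> 1 / \<epsilon>"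
  by (simp add: A_set_def)

lemma eps_nonempty:
  fixes L :: "((real^'d) \<times> (real^'h)) set" and t :: "real^'d"
  assumes lat: "is_lattice L" and S: "S > 0"
    and hyp: "{\<theta>. (\<theta>, 0) \<in> dual_lattice L \<and> ((0 < infnorm \<theta> \<and> infnorm \<theta> \<le> 1 / S) \<or>
         (0 < infnorm (\<theta> + t) \<and> infnorm (\<theta> + t) \<le> 1 / S))} = {}"
  shows "{\<epsilon>. 0 < \<epsilon> \<and> A_set S 0 \<epsilon> \<inter> dual_lattice L = {} \<and> A_set S t \<epsilon> \<inter> dual_lattice L = {}} \<noteq> {}"
proof -
  define M where "M = sqrt (real DIM(real^'d)) / S + norm t + sqrt (real DIM(real^'h))"
  define F where "F = {v \<in> dual_lattice L. norm v \<le> M}"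
  have finF: "finite F" unfolding F_def by (rule dual_finite[OF lat])
  define F' where "F' = {v \<in> F. snd v \<noteq> 0}"
  have finF': "finite F'" using finF by (simp add: F'_def)
  define m where "m = Min (insert 1 ((\<lambda>v. infnorm (snd v)) ` F'))"
  have m0: "m > 0" unfolding m_def using finF'
    by (auto simp: Min_gr_iff F'_def infnorm_pos_lt)
  have m1: "m \<le> 1" unfolding m_def using finF' by (intro Min_le) auto
  have mF: "m \<le> infnorm (snd v)" if "v \<in> F'" for v
    unfolding m_def using finF' that by (intro Min_le) auto
  define \<epsilon> where "\<epsilon> = 2 / m"
  have key: "A_set S s \<epsilon> \<inter> dual_lattice L = {}" if s: "s = 0 \<or> s = t" for s
  proof (rule ccontr)
    assume "A_set S s \<epsilon> \<inter> dual_lattice L \<noteq> {}"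
    then obtain x y where xy: "(x, y) \<in> A_set S s \<epsilon>" "(x, y) \<in> dual_lattice L" by auto
    have x1: "0 < infnorm (x + s)" "infnorm (x + s) \<le> 1 / S" and y1: "infnorm y \<le> m / 2"
      using xy(1) by (auto simp: A_set_mem \<epsilon>_def)
    have ns: "norm s \<le> norm t" using s by auto
    have "norm x \<le> norm (x + s) + norm s" using norm_triangle_ineq4[of "x + s" s] by simp
    also have "norm (x + s) \<le> sqrt (real DIM(real^'d)) * infnorm (x + s)" by (rule norm_le_infnorm)
    also have "\<dots> \<le> sqrt (real DIM(real^'d)) / S" using x1(2) S by (simp add: mult_left_mono divide_inverse)
    finally have nx: "norm x \<le> sqrt (real DIM(real^'d)) / S + norm t" using ns by linarith
    have "norm y \<le> sqrt (real DIM(real^'h)) * infnorm y" by (rule norm_le_infnorm)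
    also have "\<dots> \<le> sqrt (real DIM(real^'h)) * 1" using y1 m1 by (intro mult_left_mono) auto
    finally have ny: "norm y \<le> sqrt (real DIM(real^'h))" by simp
    have "norm (x, y) \<le> M" using norm_Pair_le[of x y] nx ny unfolding M_def by linarith
    then have vF: "(x, y) \<in> F" using xy(2) by (simp add: F_def)
    show False
    proof (cases "y = 0")
      case True
      then have "x \<in> {\<theta>. (\<theta>, 0) \<in> dual_lattice L \<and> ((0 < infnorm \<theta> \<and> infnorm \<theta> \<le> 1 / S) \<or>
         (0 < infnorm (\<theta> + t) \<and> infnorm (\<theta> + t) \<le> 1 / S))}"
        using xy(2) x1 s by auto
      then show False using hyp by blast
    next
      case False
      then have "(x, y) \<in> F'" using vF by (simp add: F'_def)
      then have "m \<le> infnorm y" using mF by fastforce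
      then show False using y1 m0 by linarith
    qed
  qed
  have "\<epsilon> > 0" using m0 by (simp add: \<epsilon>_def)
  then have "\<epsilon> \<in> {\<epsilon>. 0 < \<epsilon> \<and> A_set S 0 \<epsilon> \<inter> dual_lattice L = {} \<and> A_set S t \<epsilon> \<inter> dual_lattice L = {}}"
    using key[of 0] key[of t] by auto
  then show ?thesis by blast
qed

lemma eps_bound:
  fixes L :: "((real^'d) \<times> (real^'h)) set" and t s :: "real^'d" and S :: real
  defines "E \<equiv> {\<epsilon>. 0 < \<epsilon> \<and> A_set S 0 \<epsilon> \<inter> dual_lattice L = {} \<and> A_set S t \<epsilon> \<inter> dual_lattice L = {}}"
  assumes ne: "E \<noteq> {}" and s: "s = 0 \<or> s = t" and v: "v \<in> dual_lattice L"
    and u: "0 < infnorm (fst v + s)" "infnorm (fst v + s) \<le> 1 / S"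
  shows "Inf E * infnorm (snd v) \<ge> 1"
proof -
  define y where "y = infnorm (snd v)"
  have gt: "y > 1 / \<epsilon>" if "\<epsilon> \<in> E" for \<epsilon>
  proof -
    have "v \<notin> A_set S s \<epsilon>" using that v s unfolding E_def by auto
    then show ?thesis using u by (cases v) (auto simp: A_set_mem y_def)
  qed
  obtain \<epsilon>0 where e0: "\<epsilon>0 \<in> E" using ne by auto
  have "\<epsilon>0 > 0" using e0 by (simp add: E_def)
  then have y0: "y > 0" using gt[OF e0] by (smt (verit) divide_pos_pos)
  have "1 / y \<le> \<epsilon>" if "\<epsilon> \<in> E" for \<epsilon>
  proof -
    have "\<epsilon> > 0" using that by (simp add: E_def)
    then show ?thesis using gt[OF that] y0 by (simp add: field_simps)
  qed
  then have "1 / y \<le> Inf E" by (intro cInf_greatest ne) auto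
  then show ?thesis using y0 by (simp add: field_simps y_def)
qed

lemma eps_nonneg:
  fixes L :: "((real^'d) \<times> (real^'h)) set" and t :: "real^'d"
  assumes ne: "{\<epsilon>. 0 < \<epsilon> \<and> A_set S 0 \<epsilon> \<inter> dual_lattice L = {} \<and> A_set S t \<epsilon> \<inter> dual_lattice L = {}} \<noteq> {}"
  shows "Inf {\<epsilon>. 0 < \<epsilon> \<and> A_set S 0 \<epsilon> \<inter> dual_lattice L = {} \<and> A_set S t \<epsilon> \<inter> dual_lattice L = {}} \<ge> 0"
  by (intro cInf_greatest ne) auto

lemma One_inner: "b \<in> Basis \<Longrightarrow> (One::'a::euclidean_space) \<bullet> b = 1"
  by (simp add: inner_sum_left inner_Basis sum.delta)

lemma supball_cbox: "supball r = cbox (-(r *\<^sub>R One)) (r *\<^sub>R (One::'a::euclidean_space))"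
proof -
  have eqv: "\<bar>a\<bar> \<le> r \<longleftrightarrow> -r \<le> a \<and> a \<le> r" for a :: real by linarith
  have "infnorm x \<le> r \<longleftrightarrow> (\<forall>b\<in>Basis. \<bar>x \<bullet> b\<bar> \<le> r)" for x :: 'a
    unfolding infnorm_Max by (subst Max_le_iff) auto
  then show ?thesis
    by (auto simp: supball_def mem_box One_inner eqv)
qed

lemma fourier_phi:
  fixes u :: "'a::euclidean_space"
  shows "fourier (\<lambda>x. conv (indicator (supball r1)) (indicator (supball r2)) x / K) u
     = (\<Prod>b\<in>Basis. fourier (indicator {-r1..r1}) (u \<bullet> b)) * (\<Prod>b\<in>Basis. fourier (indicator {-r2..r2}) (u \<bullet> b)) / complex_of_real K"
  unfolding supball_cbox fourier_conv_cbox fourier_cbox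
  by (intro arg_cong2[where f="(/)"] arg_cong2[where f="(*)"] prod.cong refl) (auto simp: One_inner)

lemma fourier_psi:
  fixes y c :: "'a::euclidean_space"
  shows "fourier (\<lambda>x. conv (indicator (cbox c (c + \<eta> *\<^sub>R One))) (indicator (supball r)) x / K) y
     = (\<Prod>b\<in>Basis. fourier (indicator {c \<bullet> b..c \<bullet> b + \<eta>}) (y \<bullet> b)) * (\<Prod>b\<in>Basis. fourier (indicator {-r..r}) (y \<bullet> b)) / complex_of_real K"
  unfolding supball_cbox fourier_conv_cbox fourier_cbox
  by (intro arg_cong2[where f="(/)"] arg_cong2[where f="(*)"] prod.cong refl) (auto simp: One_inner inner_add_left)

lemma norm_prod_div:
  fixes X Y :: "'b \<Rightarrow> complex"
  assumes "finite B" "r > 0"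
  shows "norm ((\<Prod>b\<in>B. X b) * (\<Prod>b\<in>B. Y b) / complex_of_real (r ^ card B)) = (\<Prod>b\<in>B. norm (X b) * norm (Y b) / r)"
proof -
  have "norm ((\<Prod>b\<in>B. X b) * (\<Prod>b\<in>B. Y b) / complex_of_real (r ^ card B)) = (\<Prod>b\<in>B. norm (X b)) * (\<Prod>b\<in>B. norm (Y b)) / (\<Prod>b\<in>B. r)"
    using assms by (simp add: norm_divide norm_mult prod_norm norm_power)
  also have "\<dots> = (\<Prod>b\<in>B. norm (X b) * norm (Y b) / r)"
    by (simp add: prod.distrib prod_dividef)
  finally show ?thesis .
qed

lemma factor_bounds:
  fixes z :: real
  assumes "a1 \<le> c1" "r > 0"
  defines "w \<equiv> norm (fourier (indicator {a1..c1}) z) * norm (fourier (indicator {-r..r}) z) / (2 * r)"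
  shows "0 \<le> w" "w \<le> c1 - a1" "r * z^2 * w \<le> 1"
proof -
  let ?J1 = "norm (fourier (indicator {a1..c1}) z)" and ?J2 = "norm (fourier (indicator {-r..r}) z)"
  have j1: "?J1 \<le> c1 - a1" "\<bar>z\<bar> * ?J1 \<le> 1 / pi" using fourier1_norm_le[OF assms(1)] fourier1_norm_le2[OF assms(1)] by auto
  have j2: "?J2 \<le> 2 * r" "\<bar>z\<bar> * ?J2 \<le> 1 / pi" using fourier1_norm_le[of "-r" r z] fourier1_norm_le2[of "-r" r z] assms by auto
  show "0 \<le> w" using assms by (simp add: w_def)
  have "?J1 * ?J2 \<le> (c1 - a1) * (2 * r)" using j1 j2 assms(1) by (intro mult_mono) auto
  then show "w \<le> c1 - a1" using assms by (simp add: w_def field_simps)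
  have "r * z^2 * w = (\<bar>z\<bar> * ?J1) * (\<bar>z\<bar> * ?J2) / 2" using assms
    by (simp add: w_def field_simps power2_eq_square abs_mult_self_eq)
  also have "\<dots> \<le> (1 / pi) * (1 / pi) / 2" using j1 j2 by (intro divide_right_mono mult_mono) auto
  also have "\<dots> \<le> 1"
  proof -
    have "1 * 1 \<le> pi * pi" using pi_gt3 by (intro mult_mono) auto
    then show ?thesis by (simp add: field_simps)
  qed
  finally show "r * z^2 * w \<le> 1" .
qed

lemma prod_special:
  assumes "finite X" "a0 \<in> X"
  shows "(\<Prod>a\<in>X. (if a = a0 then p else q)) = p * q ^ (card X - 1)"
proof -
  have "(\<Prod>a\<in>X. (if a = a0 then p else q)) = (if a0 = a0 then p else q) * (\<Prod>a\<in>X - {a0}. (if a = a0 then p else q))"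
    by (rule prod.remove[OF assms])
  also have "(\<Prod>a\<in>X - {a0}. (if a = a0 then p else q)) = (\<Prod>a\<in>X - {a0}. q)"
    by (intro prod.cong) auto
  finally show ?thesis using assms by (simp add: card_Diff_singleton)
qed

lemma cell_arith:
  fixes X1 X2 :: "'x set" and cc TT :: "'x \<Rightarrow> real"
  assumes fin: "finite X1" "finite X2" "X1 \<inter> X2 = {}" and card: "card X1 = D" "card X2 = h"
    and K: "K0 \<ge> 0" and SR: "0 < S" "S \<le> R" and e: "0 < \<epsilon>" "\<epsilon> \<le> \<eta>"
    and c1: "\<And>a. a \<in> X1 \<Longrightarrow> cc a = S \<and> TT a = 2 * R"
    and c2: "\<And>a. a \<in> X2 \<Longrightarrow> cc a = \<epsilon> \<and> TT a = \<eta>"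
  shows "(\<Sum>a0\<in>X1. \<Prod>a\<in>X1 \<union> X2. (if a = a0 then 9 * cc a * K0 else 2 * TT a + 9 * cc a * K0))
         + (\<Sum>a0\<in>X2. \<Prod>a\<in>X1 \<union> X2. (if a = a0 then 9 * cc a * K0 else if a \<in> X1 then 3 * TT a else 2 * TT a + 9 * cc a * K0))
     \<le> (real D * (9*K0*(4+9*K0)^(D-1)*(2+9*K0)^h) + real h * (9*K0*6^D*(2+9*K0)^(h-1)))
         * (R^(D-1)*S*\<eta>^h + R^D*\<epsilon>*\<eta>^(h-1))"
proof -
  have R0: "R > 0" using SR by linarith
  have eta0: "\<eta> > 0" using e by linarith
  define A where "A = 9*K0*(4+9*K0)^(D-1)*(2+9*K0)^h"
  define B where "B = 9*K0*6^D*(2+9*K0)^(h-1)"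
  define m1 where "m1 = R^(D-1)*S*\<eta>^h"
  define m2 where "m2 = R^D*\<epsilon>*\<eta>^(h-1)"
  have A0: "A \<ge> 0" and B0: "B \<ge> 0" using K by (auto simp: A_def B_def)
  have m10: "m1 \<ge> 0" and m20: "m2 \<ge> 0" using SR R0 e eta0 by (auto simp: m1_def m2_def)
  have t1: "(\<Prod>a\<in>X1 \<union> X2. (if a = a0 then 9 * cc a * K0 else 2 * TT a + 9 * cc a * K0)) \<le> A * m1" if a0: "a0 \<in> X1" for a0
  proof -
    define \<beta> where "\<beta> a = (if a \<in> X1 then (if a = a0 then 9*K0*S else (4+9*K0)*R) else (2+9*K0)*\<eta>)" for a
    have "(\<Prod>a\<in>X1 \<union> X2. (if a = a0 then 9 * cc a * K0 else 2 * TT a + 9 * cc a * K0)) \<le> (\<Prod>a\<in>X1 \<union> X2. \<beta> a)"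
    proof (intro prod_mono conjI)
      fix a assume a: "a \<in> X1 \<union> X2"
      show "0 \<le> (if a = a0 then 9 * cc a * K0 else 2 * TT a + 9 * cc a * K0)"
        using a c1[of a] c2[of a] K SR R0 e eta0 by auto
      show "(if a = a0 then 9 * cc a * K0 else 2 * TT a + 9 * cc a * K0) \<le> \<beta> a"
      proof (cases "a \<in> X1")
        case True
        then show ?thesis using c1[of a] K SR mult_left_mono[OF SR(2), of "9*K0"] by (auto simp: \<beta>_def algebra_simps)
      next
        case False
        then have "a \<in> X2" "a \<noteq> a0" using a a0 by auto
        then show ?thesis using c2[of a] K e mult_left_mono[OF e(2), of "9*K0"] False by (auto simp: \<beta>_def algebra_simps)
      qed
    qed
    also have "\<dots> = (\<Prod>a\<in>X1. \<beta> a) * (\<Prod>a\<in>X2. \<beta> a)" by (rule prod.union_disjoint) (use fin in auto)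
    also have "(\<Prod>a\<in>X1. \<beta> a) = (\<Prod>a\<in>X1. (if a = a0 then 9*K0*S else (4+9*K0)*R))"
      by (intro prod.cong) (auto simp: \<beta>_def)
    also have "\<dots> = 9*K0*S * ((4+9*K0)*R)^(D-1)" using prod_special[OF fin(1) a0] card by simp
    also have "(\<Prod>a\<in>X2. \<beta> a) = (\<Prod>a\<in>X2. (2+9*K0)*\<eta>)" using fin by (intro prod.cong) (auto simp: \<beta>_def)
    also have "\<dots> = ((2+9*K0)*\<eta>)^h" using card by simp
    also have "9*K0*S * ((4+9*K0)*R)^(D-1) * ((2+9*K0)*\<eta>)^h = A * m1"
      by (simp add: A_def m1_def power_mult_distrib mult_ac)
    finally show ?thesis .
  qed
  have t2: "(\<Prod>a\<in>X1 \<union> X2. (if a = a0 then 9 * cc a * K0 else if a \<in> X1 then 3 * TT a else 2 * TT a + 9 * cc a * K0)) \<le> B * m2" if a0: "a0 \<in> X2" for a0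
  proof -
    define \<beta> where "\<beta> a = (if a \<in> X1 then 6*R else (if a = a0 then 9*K0*\<epsilon> else (2+9*K0)*\<eta>))" for a
    have "(\<Prod>a\<in>X1 \<union> X2. (if a = a0 then 9 * cc a * K0 else if a \<in> X1 then 3 * TT a else 2 * TT a + 9 * cc a * K0)) \<le> (\<Prod>a\<in>X1 \<union> X2. \<beta> a)"
    proof (intro prod_mono conjI)
      fix a assume a: "a \<in> X1 \<union> X2"
      show "0 \<le> (if a = a0 then 9 * cc a * K0 else if a \<in> X1 then 3 * TT a else 2 * TT a + 9 * cc a * K0)"
        using a c1[of a] c2[of a] K SR R0 e eta0 by auto
      show "(if a = a0 then 9 * cc a * K0 else if a \<in> X1 then 3 * TT a else 2 * TT a + 9 * cc a * K0) \<le> \<beta> a"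
      proof (cases "a \<in> X1")
        case True
        then have "a \<noteq> a0" using a0 fin(3) by auto
        then show ?thesis using True c1[of a] by (auto simp: \<beta>_def)
      next
        case False
        then have "a \<in> X2" using a by auto
        then show ?thesis using c2[of a] K e mult_left_mono[OF e(2), of "9*K0"] False by (auto simp: \<beta>_def algebra_simps)
      qed
    qed
    also have "\<dots> = (\<Prod>a\<in>X1. \<beta> a) * (\<Prod>a\<in>X2. \<beta> a)" by (rule prod.union_disjoint) (use fin in auto)
    also have "(\<Prod>a\<in>X1. \<beta> a) = (\<Prod>a\<in>X1. 6*R)" by (intro prod.cong) (auto simp: \<beta>_def)
    also have "\<dots> = (6*R)^D" using card by simp
    also have "(\<Prod>a\<in>X2. \<beta> a) = (\<Prod>a\<in>X2. (if a = a0 then 9*K0*\<epsilon> else (2+9*K0)*\<eta>))"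
      using fin by (intro prod.cong) (auto simp: \<beta>_def)
    also have "\<dots> = 9*K0*\<epsilon> * ((2+9*K0)*\<eta>)^(h-1)" using prod_special[OF fin(2) a0] card by simp
    also have "(6*R)^D * (9*K0*\<epsilon> * ((2+9*K0)*\<eta>)^(h-1)) = B * m2"
      by (simp add: B_def m2_def power_mult_distrib mult_ac)
    finally show ?thesis .
  qed
  have "(\<Sum>a0\<in>X1. \<Prod>a\<in>X1 \<union> X2. (if a = a0 then 9 * cc a * K0 else 2 * TT a + 9 * cc a * K0)) \<le> (\<Sum>a0\<in>X1. A * m1)"
    by (rule sum_mono) (rule t1)
  also have "\<dots> = real D * A * m1" using card by simp
  finally have s1: "(\<Sum>a0\<in>X1. \<Prod>a\<in>X1 \<union> X2. (if a = a0 then 9 * cc a * K0 else 2 * TT a + 9 * cc a * K0)) \<le> real D * A * m1" .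
  have "(\<Sum>a0\<in>X2. \<Prod>a\<in>X1 \<union> X2. (if a = a0 then 9 * cc a * K0 else if a \<in> X1 then 3 * TT a else 2 * TT a + 9 * cc a * K0)) \<le> (\<Sum>a0\<in>X2. B * m2)"
    by (rule sum_mono) (rule t2)
  also have "\<dots> = real h * B * m2" using card by simp
  finally have s2: "(\<Sum>a0\<in>X2. \<Prod>a\<in>X1 \<union> X2. (if a = a0 then 9 * cc a * K0 else if a \<in> X1 then 3 * TT a else 2 * TT a + 9 * cc a * K0)) \<le> real h * B * m2" .
  have "real D * A * m1 + real h * B * m2 \<le> (real D * A + real h * B) * (m1 + m2)"
    using A0 B0 m10 m20 by (simp add: algebra_simps)
  then show ?thesis using s1 s2 unfolding A_def B_def m1_def m2_def by linarith
qed

lemma floor_eq_close: "\<lfloor>x::real\<rfloor> = \<lfloor>y\<rfloor> \<Longrightarrow> \<bar>x - y\<bar> < 1"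
  by linarith

lemma infnorm_le_each: "(\<And>b. b \<in> Basis \<Longrightarrow> \<bar>x \<bullet> b\<bar> \<le> r) \<Longrightarrow> infnorm (x::'a::euclidean_space) \<le> r"
  unfolding infnorm_Max by (subst Max_le_iff) auto

lemma infnorm_less_each: "(\<And>b. b \<in> Basis \<Longrightarrow> \<bar>x \<bullet> b\<bar> < r) \<Longrightarrow> infnorm (x::'a::euclidean_space) < r"
  unfolding infnorm_Max by (subst Max_less_iff) auto

lemma infnorm_attained: "\<exists>b\<in>Basis. \<bar>x \<bullet> b\<bar> = infnorm (x::'a::euclidean_space)"
proof -
  have "Max ((\<lambda>i. \<bar>x \<bullet> i\<bar>) ` Basis) \<in> (\<lambda>i. \<bar>x \<bullet> i\<bar>) ` Basis" by (intro Max_in) auto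
  then obtain b where "b \<in> Basis" "Max ((\<lambda>i. \<bar>x \<bullet> i\<bar>) ` Basis) = \<bar>x \<bullet> b\<bar>" by (metis (no_types, lifting) imageE)
  then show ?thesis unfolding infnorm_Max by auto
qed

lemma card_Basis_cart: "card (Basis :: (real^'n) set) = CARD('n)"
  using DIM_cart[where 'a=real and 'b='n] by simp

lemma main_bound:
  fixes L :: "((real^'d) \<times> (real^'h)) set" and W :: "(real^'h) set" and c :: "real^'h"
    and \<eta> :: real and t :: "real^'d" and R S \<epsilon>R :: real
  assumes lat: "is_lattice L" and cl: "closure (snd ` L) = UNIV" and eta: "0 < \<eta>"
    and W: "W = cbox c (c + \<eta> *\<^sub>R One)" and R: "0 < R" and S: "0 < S" "S \<le> R"
    and hyp: "{\<theta>. (\<theta>, 0) \<in> dual_lattice L \<and>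
        ((0 < infnorm \<theta> \<and> infnorm \<theta> \<le> 1 / S) \<or>
         (0 < infnorm (\<theta> + t) \<and> infnorm (\<theta> + t) \<le> 1 / S))} = {}"
    and eR: "\<epsilon>R = Inf {\<epsilon>. 0 < \<epsilon> \<and> A_set S 0 \<epsilon> \<inter> dual_lattice L = {} \<and>
                    A_set S t \<epsilon> \<inter> dual_lattice L = {}}"
    and eRle: "\<epsilon>R \<le> \<eta>"
  shows "(let \<phi> = (\<lambda>x. conv (indicator (supball R)) (indicator (supball S)) x
                   / (2 ^ CARD('d) * S ^ CARD('d)));
         \<psi> = (\<lambda>y. conv (indicator W) (indicator (supball \<epsilon>R)) y
                   / (2 ^ CARD('h) * \<epsilon>R ^ CARD('h)));
         f = (\<lambda>(\<theta>, \<theta>s). fourier \<phi> (\<theta> + t) * fourier \<psi> \<theta>s);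
         I = {(\<theta>, \<theta>s). (\<theta>, \<theta>s) \<in> dual_lattice L \<and> \<theta> + t \<noteq> 0}
     in f summable_on I \<and>
        norm (infsum f I) \<le> (real CARD('d) * (9*K0*(4+9*K0)^(CARD('d)-1)*(2+9*K0)^CARD('h)) + real CARD('h) * (9*K0*6^CARD('d)*(2+9*K0)^(CARD('h)-1)) + 1)
                             * (R ^ (CARD('d) - 1) * S * \<eta> ^ CARD('h)
                               + R ^ CARD('d) * \<epsilon>R * \<eta> ^ (CARD('h) - 1)))"
proof -
  define E where "E = {\<epsilon>. 0 < \<epsilon> \<and> A_set S 0 \<epsilon> \<inter> dual_lattice L = {} \<and> A_set S t \<epsilon> \<inter> dual_lattice L = {}}"
  have Ene: "E \<noteq> {}" unfolding E_def by (rule eps_nonempty[OF lat S(1) hyp])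
  have eR0: "\<epsilon>R \<ge> 0" unfolding eR by (rule eps_nonneg) (use Ene E_def in simp)
  define D where "D = CARD('d)"
  define h where "h = CARD('h)"
  have D0: "D > 0" and h0: "h > 0" by (simp_all add: D_def h_def)
  define C0 where "C0 = real D * (9*K0*(4+9*K0)^(D-1)*(2+9*K0)^h) + real h * (9*K0*6^D*(2+9*K0)^(h-1))"
  define Xm where "Xm = R ^ (D - 1) * S * \<eta> ^ h + R ^ D * \<epsilon>R * \<eta> ^ (h - 1)"
  have Xm0: "Xm \<ge> 0" using R S eta eR0 by (simp add: Xm_def)
  have C00: "C0 \<ge> 0" using K0_nonneg by (simp add: C0_def)
  define \<phi> where "\<phi> = (\<lambda>x::real^'d. conv (indicator (supball R)) (indicator (supball S)) x / (2 ^ CARD('d) * S ^ CARD('d)))"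
  define \<psi> where "\<psi> = (\<lambda>y::real^'h. conv (indicator W) (indicator (supball \<epsilon>R)) y / (2 ^ CARD('h) * \<epsilon>R ^ CARD('h)))"
  define f where "f = (\<lambda>(\<theta>, \<theta>s). fourier \<phi> (\<theta> + t) * fourier \<psi> \<theta>s)"
  define I where "I = {(\<theta>, \<theta>s). (\<theta>, \<theta>s) \<in> dual_lattice L \<and> \<theta> + t \<noteq> 0}"
  have goal: "f summable_on I \<and> norm (infsum f I) \<le> C0 * Xm"
  proof (cases "\<epsilon>R = 0")
    case True
    have "CARD('h) \<noteq> 0" by simp
    then have "\<psi> = (\<lambda>_. 0)" using True by (simp add: \<psi>_def power_0_left)
    then have "fourier \<psi> = (\<lambda>_. 0)" by (simp add: fourier_def fun_eq_iff)
    then have "f = (\<lambda>_. 0)" by (simp add: f_def fun_eq_iff)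
    then show ?thesis using C00 Xm0 by simp
  next
    case False
    then have eRp: "\<epsilon>R > 0" using eR0 by simp
    define X1 where "X1 = (Inl ` (Basis :: (real^'d) set) :: ((real^'d) + (real^'h)) set)"
    define X2 where "X2 = (Inr ` (Basis :: (real^'h) set) :: ((real^'d) + (real^'h)) set)"
    define z where "z v a = (case a of Inl b \<Rightarrow> (fst v + t) \<bullet> b | Inr b \<Rightarrow> snd v \<bullet> b)"
      for v :: "(real^'d) \<times> (real^'h)" and a :: "(real^'d) + (real^'h)"
    define cc where "cc a = (case a of Inl (_::real^'d) \<Rightarrow> S | Inr (_::real^'h) \<Rightarrow> \<epsilon>R)" for a
    define TT where "TT a = (case a of Inl (_::real^'d) \<Rightarrow> 2 * R | Inr (_::real^'h) \<Rightarrow> \<eta>)" for a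
    define mm where "mm a v = (case a of
        Inl b \<Rightarrow> norm (fourier (indicator {-R..R}) ((fst v + t) \<bullet> b)) * norm (fourier (indicator {-S..S}) ((fst v + t) \<bullet> b)) / (2 * S)
      | Inr b \<Rightarrow> norm (fourier (indicator {c \<bullet> b..c \<bullet> b + \<eta>}) (snd v \<bullet> b)) * norm (fourier (indicator {-\<epsilon>R..\<epsilon>R}) (snd v \<bullet> b)) / (2 * \<epsilon>R))"
      for a :: "(real^'d) + (real^'h)" and v :: "(real^'d) \<times> (real^'h)"
    have finX: "finite X1" "finite X2" "X1 \<inter> X2 = {}" by (auto simp: X1_def X2_def)
    have cardX: "card X1 = D" "card X2 = h"
      by (auto simp: X1_def X2_def D_def h_def card_image card_Basis_cart)
    have nf: "norm (f v) = (\<Prod>a\<in>X1 \<union> X2. mm a v)" for v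
    proof -
      obtain \<theta> \<theta>s where v: "v = (\<theta>, \<theta>s)" by (cases v)
      have eqd: "(2::real) ^ CARD('d) * S ^ CARD('d) = (2 * S) ^ card (Basis :: (real^'d) set)"
        by (simp add: card_Basis_cart power_mult_distrib)
      have eqh: "(2::real) ^ CARD('h) * \<epsilon>R ^ CARD('h) = (2 * \<epsilon>R) ^ card (Basis :: (real^'h) set)"
        by (simp add: card_Basis_cart power_mult_distrib)
      have n1: "norm (fourier \<phi> (\<theta> + t)) = (\<Prod>b\<in>Basis. mm (Inl b) v)"
        unfolding \<phi>_def fourier_phi eqd
        by (subst norm_prod_div) (use S in \<open>auto simp: mm_def v\<close>)
      have n2: "norm (fourier \<psi> \<theta>s) = (\<Prod>b\<in>Basis. mm (Inr b) v)"
        unfolding \<psi>_def W fourier_psi eqh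
        by (subst norm_prod_div) (use eRp in \<open>auto simp: mm_def v\<close>)
      have "(\<Prod>a\<in>X1 \<union> X2. mm a v) = (\<Prod>a\<in>X1. mm a v) * (\<Prod>a\<in>X2. mm a v)"
        by (rule prod.union_disjoint) (use finX in auto)
      also have "(\<Prod>a\<in>X1. mm a v) = (\<Prod>b\<in>Basis. mm (Inl b) v)"
        unfolding X1_def by (subst prod.reindex) (auto simp: inj_on_def)
      also have "(\<Prod>a\<in>X2. mm a v) = (\<Prod>b\<in>Basis. mm (Inr b) v)"
        unfolding X2_def by (subst prod.reindex) (auto simp: inj_on_def)
      finally show ?thesis using n1 n2 by (simp add: f_def v norm_mult)
    qed
    have mprops: "0 \<le> mm a v \<and> mm a v \<le> TT a \<and> cc a * (z v a)^2 * mm a v \<le> 1" if "a \<in> X1 \<union> X2" for a v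
    proof (cases a)
      case (Inl b)
      have "-R \<le> R" using R by simp
      from factor_bounds[OF this S(1), of "(fst v + t) \<bullet> b"] show ?thesis
        by (simp add: Inl mm_def TT_def cc_def z_def)
    next
      case (Inr b)
      have "c \<bullet> b \<le> c \<bullet> b + \<eta>" using eta by simp
      from factor_bounds[OF this eRp, of "snd v \<bullet> b"] show ?thesis
        by (simp add: Inr mm_def TT_def cc_def z_def)
    qed
    have sep: "v = w" if v: "v \<in> dual_lattice L" and w: "w \<in> dual_lattice L"
      and d1: "infnorm (fst v - fst w) \<le> 1 / S" and d2: "infnorm (snd v - snd w) < 1 / \<epsilon>R" for v w
    proof -
      define d where "d = v - w"
      have dL: "d \<in> dual_lattice L" unfolding d_def by (rule dual_diff[OF v w])
      show ?thesis
      proof (cases "fst d = 0")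
        case True
        then have "(0, snd d) \<in> dual_lattice L" using dL by (metis prod.collapse)
        then have "snd d = 0" by (rule dual_inj[OF cl])
        then show ?thesis using True by (simp add: d_def prod_eq_iff)
      next
        case False
        have "Inf E * infnorm (snd d) \<ge> 1"
          unfolding E_def
          by (rule eps_bound[where s=0]) (use Ene dL False d1 in \<open>auto simp: E_def d_def infnorm_pos_lt\<close>)
        then have "\<epsilon>R * infnorm (snd d) \<ge> 1" using eR E_def by simp
        moreover have "\<epsilon>R * infnorm (snd d) < 1" using d2 eRp by (simp add: d_def field_simps)
        ultimately show ?thesis by linarith
      qed
    qed
    have inj: "inj_on (\<lambda>v. restrict (\<lambda>a. \<lfloor>cc a * z v a\<rfloor>) (X1 \<union> X2)) I"
    proof (rule inj_onI)
      fix v w assume vI: "v \<in> I" and wI: "w \<in> I"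
        and eq: "restrict (\<lambda>a. \<lfloor>cc a * z v a\<rfloor>) (X1 \<union> X2) = restrict (\<lambda>a. \<lfloor>cc a * z w a\<rfloor>) (X1 \<union> X2)"
      have eqa: "\<lfloor>cc a * z v a\<rfloor> = \<lfloor>cc a * z w a\<rfloor>" if "a \<in> X1 \<union> X2" for a
        using fun_cong[OF eq, of a] that by simp
      have "infnorm (fst v - fst w) \<le> 1 / S"
      proof (rule infnorm_le_each)
        fix b :: "real^'d" assume b: "b \<in> Basis"
        have "\<bar>S * ((fst v + t) \<bullet> b) - S * ((fst w + t) \<bullet> b)\<bar> < 1"
          using floor_eq_close[OF eqa[of "Inl b"]] b by (simp add: X1_def cc_def z_def)
        moreover have "S * ((fst v + t) \<bullet> b) - S * ((fst w + t) \<bullet> b) = S * ((fst v - fst w) \<bullet> b)"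
          by (simp add: inner_diff_left inner_add_left algebra_simps)
        ultimately have "S * \<bar>(fst v - fst w) \<bullet> b\<bar> < 1"
          using S by (simp add: abs_mult)
        then show "\<bar>(fst v - fst w) \<bullet> b\<bar> \<le> 1 / S" using S by (simp add: field_simps)
      qed
      moreover have "infnorm (snd v - snd w) < 1 / \<epsilon>R"
      proof (rule infnorm_less_each)
        fix b :: "real^'h" assume b: "b \<in> Basis"
        have "\<bar>\<epsilon>R * (snd v \<bullet> b) - \<epsilon>R * (snd w \<bullet> b)\<bar> < 1"
          using floor_eq_close[OF eqa[of "Inr b"]] b by (simp add: X2_def cc_def z_def)
        moreover have "\<epsilon>R * (snd v \<bullet> b) - \<epsilon>R * (snd w \<bullet> b) = \<epsilon>R * ((snd v - snd w) \<bullet> b)"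
          by (simp add: inner_diff_left algebra_simps)
        ultimately have "\<epsilon>R * \<bar>(snd v - snd w) \<bullet> b\<bar> < 1"
          using eRp by (simp add: abs_mult)
        then show "\<bar>(snd v - snd w) \<bullet> b\<bar> < 1 / \<epsilon>R" using eRp by (simp add: field_simps)
      qed
      moreover have "v \<in> dual_lattice L" "w \<in> dual_lattice L" using vI wI by (auto simp: I_def)
      ultimately show "v = w" using sep by blast
    qed
    have cases: "(\<exists>a\<in>X1. \<bar>z v a\<bar> \<ge> 1 / cc a) \<or>
                   ((\<forall>a\<in>X1. \<bar>z v a\<bar> \<le> 1 / cc a) \<and> (\<exists>a\<in>X2. \<bar>z v a\<bar> \<ge> 1 / cc a))" if vI: "v \<in> I" for v
    proof (cases "\<exists>b\<in>(Basis::(real^'d) set). \<bar>(fst v + t) \<bullet> b\<bar> \<ge> 1 / S")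
      case True
      then obtain b :: "real^'d" where "b \<in> Basis" "\<bar>(fst v + t) \<bullet> b\<bar> \<ge> 1 / S" by auto
      then show ?thesis by (intro disjI1 bexI[of _ "Inl b"]) (auto simp: X1_def z_def cc_def)
    next
      case False
      then have small: "\<bar>(fst v + t) \<bullet> b\<bar> \<le> 1 / S" if "b \<in> Basis" for b :: "real^'d"
        using that by force
      have vL: "v \<in> dual_lattice L" and u0: "fst v + t \<noteq> 0" using vI by (auto simp: I_def)
      have "Inf E * infnorm (snd v) \<ge> 1"
        unfolding E_def
        by (rule eps_bound[where s=t]) (use Ene vL u0 small in \<open>auto simp: E_def infnorm_pos_lt intro: infnorm_le_each\<close>)
      then have "\<epsilon>R * infnorm (snd v) \<ge> 1" using eR E_def by simp
      then have big: "infnorm (snd v) \<ge> 1 / \<epsilon>R" using eRp by (simp add: field_simps)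
      obtain b :: "real^'h" where b: "b \<in> Basis" "\<bar>snd v \<bullet> b\<bar> = infnorm (snd v)"
        using infnorm_attained by blast
      show ?thesis
      proof (intro disjI2 conjI)
        show "\<forall>a\<in>X1. \<bar>z v a\<bar> \<le> 1 / cc a" using small by (auto simp: X1_def z_def cc_def)
        show "\<exists>a\<in>X2. \<bar>z v a\<bar> \<ge> 1 / cc a" using b big
          by (intro bexI[of _ "Inr b"]) (auto simp: X2_def z_def cc_def)
      qed
    qed
    have ccpos: "cc a > 0" if "a \<in> X1 \<union> X2" for a using that S eRp by (auto simp: X1_def X2_def cc_def)
    have TTnn: "TT a \<ge> 0" if "a \<in> X1 \<union> X2" for a using that R eta by (auto simp: X1_def X2_def TT_def)
    have mprops': "0 \<le> mm a v \<and> mm a v \<le> TT a \<and> cc a * (z v a)^2 * mm a v \<le> 1"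
      if "a \<in> X1 \<union> X2" "v \<in> I" for a v using mprops that(1) by blast
    note LB = lattice_cell_bound[where V=I and c=cc and T=TT and m=mm and z=z, OF finX ccpos TTnn mprops' inj cases]
    have c1: "cc a = S \<and> TT a = 2 * R" if "a \<in> X1" for a using that by (auto simp: X1_def cc_def TT_def)
    have c2: "cc a = \<epsilon>R \<and> TT a = \<eta>" if "a \<in> X2" for a using that by (auto simp: X2_def cc_def TT_def)
    note AR = cell_arith[OF finX cardX K0_nonneg S(1) S(2) eRp eRle, where cc=cc and TT=TT, OF c1 c2]
    have ns: "(\<lambda>v. norm (f v)) summable_on I" using LB nf by simp
    have fs: "f summable_on I" by (rule abs_summable_summable[OF ns])
    have "norm (infsum f I) \<le> infsum (\<lambda>v. norm (f v)) I" by (rule norm_infsum_bound[OF ns])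
    also have "\<dots> = infsum (\<lambda>v. \<Prod>a\<in>X1 \<union> X2. mm a v) I" using nf by simp
    also have "\<dots> \<le> C0 * Xm" using LB AR unfolding C0_def Xm_def by linarith
    finally show ?thesis using fs by simp
  qed
  have "C0 * Xm \<le> (C0 + 1) * Xm" using Xm0 by (simp add: algebra_simps)
  then have "f summable_on I \<and> norm (infsum f I) \<le> (C0 + 1) * Xm" using goal by linarith
  then show ?thesis unfolding Let_def \<phi>_def \<psi>_def f_def I_def C0_def D_def h_def Xm_def .
qed

theorem proposition4p1:
  shows "\<exists>C>0. \<forall>(L :: ((real^'d) \<times> (real^'h)) set) (W :: (real^'h) set) (c :: real^'h)
      (\<eta>::real) (t :: real^'d) (R::real) (S::real) (\<epsilon>R::real).
    is_lattice L \<and> inj_on fst L \<and> closure (snd ` L) = UNIV \<and>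
    0 < \<eta> \<and> W = cbox c (c + \<eta> *\<^sub>R One) \<and>
    0 < R \<and> 0 < S \<and> S \<le> R \<and>
    {\<theta>. (\<theta>, 0) \<in> dual_lattice L \<and>
        ((0 < infnorm \<theta> \<and> infnorm \<theta> \<le> 1 / S) \<or>
         (0 < infnorm (\<theta> + t) \<and> infnorm (\<theta> + t) \<le> 1 / S))} = {} \<and>
    \<epsilon>R = Inf {\<epsilon>. 0 < \<epsilon> \<and> A_set S 0 \<epsilon> \<inter> dual_lattice L = {} \<and>
                    A_set S t \<epsilon> \<inter> dual_lattice L = {}} \<and>
    \<epsilon>R \<le> \<eta>
    \<longrightarrow>
    (let \<phi> = (\<lambda>x. conv (indicator (supball R)) (indicator (supball S)) x
                   / (2 ^ CARD('d) * S ^ CARD('d)));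
         \<psi> = (\<lambda>y. conv (indicator W) (indicator (supball \<epsilon>R)) y
                   / (2 ^ CARD('h) * \<epsilon>R ^ CARD('h)));
         f = (\<lambda>(\<theta>, \<theta>s). fourier \<phi> (\<theta> + t) * fourier \<psi> \<theta>s);
         I = {(\<theta>, \<theta>s). (\<theta>, \<theta>s) \<in> dual_lattice L \<and> \<theta> + t \<noteq> 0}
     in f summable_on I \<and>
        norm (infsum f I) \<le> C * (R ^ (CARD('d) - 1) * S * \<eta> ^ CARD('h)
                               + R ^ CARD('d) * \<epsilon>R * \<eta> ^ (CARD('h) - 1)))"
proof -
  define C0 where "C0 = real CARD('d) * (9*K0*(4+9*K0)^(CARD('d)-1)*(2+9*K0)^CARD('h)) + real CARD('h) * (9*K0*6^CARD('d)*(2+9*K0)^(CARD('h)-1))"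
  have "C0 \<ge> 0" using K0_nonneg by (simp add: C0_def)
  then have Cpos: "C0 + 1 > 0" by linarith
  show ?thesis
  proof (intro exI[of _ "C0 + 1"] conjI allI impI Cpos)
    fix L :: "((real^'d) \<times> (real^'h)) set" and W :: "(real^'h) set" and c :: "real^'h"
      and \<eta> :: real and t :: "real^'d" and R S \<epsilon>R :: real
    assume H: "is_lattice L \<and> inj_on fst L \<and> closure (snd ` L) = UNIV \<and>
    0 < \<eta> \<and> W = cbox c (c + \<eta> *\<^sub>R One) \<and>
    0 < R \<and> 0 < S \<and> S \<le> R \<and>
    {\<theta>. (\<theta>, 0) \<in> dual_lattice L \<and>
        ((0 < infnorm \<theta> \<and> infnorm \<theta> \<le> 1 / S) \<or>
         (0 < infnorm (\<theta> + t) \<and> infnorm (\<theta> + t) \<le> 1 / S))} = {} \<and>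
    \<epsilon>R = Inf {\<epsilon>. 0 < \<epsilon> \<and> A_set S 0 \<epsilon> \<inter> dual_lattice L = {} \<and>
                    A_set S t \<epsilon> \<inter> dual_lattice L = {}} \<and>
    \<epsilon>R \<le> \<eta>"
    show "let \<phi> = (\<lambda>x. conv (indicator (supball R)) (indicator (supball S)) x
                   / (2 ^ CARD('d) * S ^ CARD('d)));
         \<psi> = (\<lambda>y. conv (indicator W) (indicator (supball \<epsilon>R)) y
                   / (2 ^ CARD('h) * \<epsilon>R ^ CARD('h)));
         f = (\<lambda>(\<theta>, \<theta>s). fourier \<phi> (\<theta> + t) * fourier \<psi> \<theta>s);
         I = {(\<theta>, \<theta>s). (\<theta>, \<theta>s) \<in> dual_lattice L \<and> \<theta> + t \<noteq> 0}
     in f summable_on I \<and>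
        norm (infsum f I) \<le> (C0 + 1) * (R ^ (CARD('d) - 1) * S * \<eta> ^ CARD('h)
                               + R ^ CARD('d) * \<epsilon>R * \<eta> ^ (CARD('h) - 1))"
      unfolding C0_def by (rule main_bound) (use H in auto)
  qed
qed

end
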